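(* Let $1\le r\le n$, let $B^{(1)},\dots,B^{(r)}\in\mathbb{C}^{n\times n}$ be Hermitian, and let $\tilde g(U)=\sum_{q=1}^ru_q^HB^{(q)}u_q$ for $U=(u_1,\dots,u_n)\in\mathcal{U}_n$. Let $U\in\mathcal{U}_n$ and $1\le i<j\le n$ with $i\le r$. Then there exist a real symmetric $M\in\mathbb{R}^{3\times3}$ and $C\in\mathbb{R}$ such that $\tilde g(UG_{ij}(\Psi(\theta,\phi)))=z_{1,1}(\theta,\phi)^TMz_{1,1}(\theta,\phi)+C$ for all $\theta,\phi\in\mathbb{R}$.
   Context: $\mathcal{U}_n$ is the group of $n\times n$ unitary matrices. $G_{ij}(\Psi)$ is the $n\times n$ identity with entries $(i,i),(i,j),(j,i),(j,j)$ replaced by $\Psi_{11},\Psi_{12},\Psi_{21},\Psi_{22}$; $\Psi(\theta,\phi)=\begin{bmatrix}\cos\theta&-\sin\theta e^{\mathrm{i}\phi}\\ \sin\theta e^{-\mathrm{i}\phi}&\cos\theta\end{bmatrix}$; $z_{1,1}(\theta,\phi)=(\cos\theta,-\sin\theta\cos\phi,-\sin\theta\sin\phi)^T$. *)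

theory Defs
  imports "Jordan_Normal_Form.Schur_Decomposition"
begin

(* Indices are 0-based: rows/columns of an n x n matrix are 0..n-1. *)

definition unitary_mat :: "nat \<Rightarrow> complex mat \<Rightarrow> bool" where
  "unitary_mat n U \<longleftrightarrow> U \<in> carrier_mat n n \<and> mat_adjoint U * U = 1\<^sub>m n"

definition hermitian_mat :: "nat \<Rightarrow> complex mat \<Rightarrow> bool" where
  "hermitian_mat n B \<longleftrightarrow> B \<in> carrier_mat n n \<and> mat_adjoint B = B"

definition Psi :: "real \<Rightarrow> real \<Rightarrow> complex mat" where
  "Psi \<theta> \<phi> = mat_of_rows_list 2
     [[complex_of_real (cos \<theta>), - complex_of_real (sin \<theta>) * cis \<phi>],
      [complex_of_real (sin \<theta>) * cis (- \<phi>), complex_of_real (cos \<theta>)]]"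

definition Givens :: "nat \<Rightarrow> nat \<Rightarrow> nat \<Rightarrow> complex mat \<Rightarrow> complex mat" where
  "Givens n i j P = mat n n (\<lambda>(a, b).
      if a = i \<and> b = i then P $$ (0, 0)
      else if a = i \<and> b = j then P $$ (0, 1)
      else if a = j \<and> b = i then P $$ (1, 0)
      else if a = j \<and> b = j then P $$ (1, 1)
      else if a = b then 1 else 0)"

definition z11 :: "real \<Rightarrow> real \<Rightarrow> real vec" where
  "z11 \<theta> \<phi> = vec_of_list [cos \<theta>, - sin \<theta> * cos \<phi>, - sin \<theta> * sin \<phi>]"

text \<open>g~(U) = sum_{q=1}^r u_q^H B^(q) u_q, where u_q is the q-th column of U
  (0-based here: q = 0..r-1, B q is B^(q+1)).\<close>
definition gtilde :: "nat \<Rightarrow> (nat \<Rightarrow> complex mat) \<Rightarrow> complex mat \<Rightarrow> complex" where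
  "gtilde r B U = (\<Sum>q<r. conjugate (col U q) \<bullet> (B q *\<^sub>v col U q))"

end

theory Submission
  imports Defs
begin

definition Qf :: "nat \<Rightarrow> complex mat \<Rightarrow> (nat \<Rightarrow> complex) \<Rightarrow> (nat \<Rightarrow> complex) \<Rightarrow> complex" where
  "Qf n A x y = (\<Sum>a<n. \<Sum>b<n. cnj (x a) * A $$ (a,b) * y b)"

lemma herm_entry: assumes "hermitian_mat n A" "a < n" "b < n"
  shows "A $$ (a,b) = cnj (A $$ (b,a))"
proof -
  have c: "A \<in> carrier_mat n n" and e: "mat_adjoint A = A" using assms(1) unfolding hermitian_mat_def by auto
  have "A $$ (a,b) = mat_adjoint A $$ (a,b)" using e by simp
  also have "\<dots> = cnj (A $$ (b,a))" unfolding mat_adjoint_def using c assms(2,3) by (simp add: mat_of_rows_index)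
  finally show ?thesis .
qed

lemma Qf_swap: assumes "hermitian_mat n A"
  shows "Qf n A y x = cnj (Qf n A x y)"
proof -
  have "Qf n A y x = (\<Sum>a<n. \<Sum>b<n. cnj (y a) * cnj (A $$ (b,a)) * x b)"
    unfolding Qf_def
  proof (intro sum.cong refl)
    fix a b assume "a \<in> {..<n}" "b \<in> {..<n}"
    then have "A $$ (a,b) = cnj (A $$ (b,a))" by (intro herm_entry[OF assms]) auto
    then show "cnj (y a) * A $$ (a,b) * x b = cnj (y a) * cnj (A $$ (b,a)) * x b" by simp
  qed
  also have "\<dots> = (\<Sum>b<n. \<Sum>a<n. cnj (y a) * cnj (A $$ (b,a)) * x b)" by (rule sum.swap)
  also have "\<dots> = (\<Sum>a<n. \<Sum>b<n. x a * cnj (A $$ (a,b)) * cnj (y b))"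
    by (intro sum.cong refl) (simp only: mult.commute mult.left_commute)
  also have "\<dots> = cnj (Qf n A x y)" unfolding Qf_def cnj_sum complex_cnj_mult complex_cnj_cnj ..
  finally show ?thesis .
qed

lemma Qf_real: assumes "hermitian_mat n A"
  shows "Qf n A x x = complex_of_real (Re (Qf n A x x))"
  using Qf_swap[OF assms, of x x] by (metis Reals_cnj_iff complex_is_Real_iff of_real_Re)

lemma Qf_bilin:
  "Qf n A (\<lambda>a. p * x a + t * y a) (\<lambda>a. p * x a + t * y a) =
    cnj p * p * Qf n A x x + cnj p * t * Qf n A x y + cnj t * p * Qf n A y x + cnj t * t * Qf n A y y"
  unfolding Qf_def
  by (simp add: sum_distrib_left sum.distrib algebra_simps)

lemma Qf_cong: assumes "\<And>a. a < n \<Longrightarrow> x a = x' a"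
  shows "Qf n A x x = Qf n A x' x'"
  unfolding Qf_def using assms by (intro sum.cong refl) auto

lemma quad_col: assumes "V \<in> carrier_mat n n" "A \<in> carrier_mat n n" "q < n"
  shows "conjugate (col V q) \<bullet> (A *\<^sub>v col V q) = Qf n A (\<lambda>a. V $$ (a,q)) (\<lambda>a. V $$ (a,q))"
  using assms unfolding Qf_def scalar_prod_def
  by (simp add: scalar_prod_def sum_distrib_left mult.assoc lessThan_atLeast0)

lemma Psi_entries:
  "Psi t p $$ (0,0) = complex_of_real (cos t)"
  "Psi t p $$ (0,1) = - complex_of_real (sin t) * cis p"
  "Psi t p $$ (1,0) = complex_of_real (sin t) * cis (- p)"
  "Psi t p $$ (1,1) = complex_of_real (cos t)"
  unfolding Psi_def mat_of_rows_list_def by simp_all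

lemma Psi_entries':
  "Psi t p $$ (0,Suc 0) = - complex_of_real (sin t) * cis p"
  "Psi t p $$ (Suc 0,0) = complex_of_real (sin t) * cis (- p)"
  "Psi t p $$ (Suc 0,Suc 0) = complex_of_real (cos t)"
  unfolding Psi_def mat_of_rows_list_def by simp_all

lemma Givens_carrier: "Givens n i j P \<in> carrier_mat n n"
  unfolding Givens_def by simp

lemma Givens_col:
  assumes U: "U \<in> carrier_mat n n" and ij: "i < j" "j < n" and a: "a < n" and k: "k < n"
  shows "(U * Givens n i j P) $$ (a,k) =
    (if k = i then U $$ (a,i) * P $$ (0,0) + U $$ (a,j) * P $$ (1,0)
     else if k = j then U $$ (a,i) * P $$ (0,1) + U $$ (a,j) * P $$ (1,1)
     else U $$ (a,k))"
proof -
  have "(U * Givens n i j P) $$ (a,k) = (\<Sum>l<n. U $$ (a,l) * Givens n i j P $$ (l,k))"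
    using U a k Givens_carrier[of n i j P] by (simp add: scalar_prod_def lessThan_atLeast0)
  also have "\<dots> = (\<Sum>l<n. (if l = i then U $$ (a,i) * (if k = i then P $$ (0,0) else if k = j then P $$ (0,1) else 0) else 0)
        + (if l = j then U $$ (a,j) * (if k = i then P $$ (1,0) else if k = j then P $$ (1,1) else 0) else 0)
        + (if l = k \<and> k \<noteq> i \<and> k \<noteq> j then U $$ (a,k) else 0))"
  proof (intro sum.cong refl)
    fix l assume "l \<in> {..<n}"
    then have l: "l < n" by simp
    have G: "Givens n i j P $$ (l,k) = (if l = i \<and> k = i then P $$ (0, 0)
      else if l = i \<and> k = j then P $$ (0, 1)
      else if l = j \<and> k = i then P $$ (1, 0)
      else if l = j \<and> k = j then P $$ (1, 1)
      else if l = k then 1 else 0)" unfolding Givens_def using l k by simp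
    show "U $$ (a,l) * Givens n i j P $$ (l,k) = (if l = i then U $$ (a,i) * (if k = i then P $$ (0,0) else if k = j then P $$ (0,1) else 0) else 0)
        + (if l = j then U $$ (a,j) * (if k = i then P $$ (1,0) else if k = j then P $$ (1,1) else 0) else 0)
        + (if l = k \<and> k \<noteq> i \<and> k \<noteq> j then U $$ (a,k) else 0)"
    proof (cases "k = i")
      case True
      then show ?thesis unfolding G using ij by simp
    next
      case ki: False
      show ?thesis
      proof (cases "k = j")
        case True
        then show ?thesis unfolding G using ij ki by simp
      next
        case False
        then show ?thesis unfolding G using ij ki by simp
      qed
    qed
  qed
  also have "\<dots> = (if k = i then U $$ (a,i) * P $$ (0,0) + U $$ (a,j) * P $$ (1,0)
     else if k = j then U $$ (a,i) * P $$ (0,1) + U $$ (a,j) * P $$ (1,1)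
     else U $$ (a,k))"
    using ij k by (simp add: sum.distrib)
  finally show ?thesis .
qed


lemma term_i:
  "cnj (complex_of_real c) * complex_of_real c * complex_of_real al
   + cnj (complex_of_real c) * (complex_of_real s * cis (- ph)) * be
   + cnj (complex_of_real s * cis (- ph)) * complex_of_real c * cnj be
   + cnj (complex_of_real s * cis (- ph)) * (complex_of_real s * cis (- ph)) * complex_of_real ga
   = complex_of_real (c^2 * al + s^2 * ga + 2 * c * s * (Re be * cos ph + Im be * sin ph))"
proof -
  have e: "(cos ph)^2 + (sin ph)^2 = 1" by simp
  show ?thesis
    by (simp add: complex_eq_iff cis.sel algebra_simps power2_eq_square)
qed

lemma term_j:
  "cnj (- complex_of_real s * cis ph) * (- complex_of_real s * cis ph) * complex_of_real al
   + cnj (- complex_of_real s * cis ph) * complex_of_real c * be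
   + cnj (complex_of_real c) * (- complex_of_real s * cis ph) * cnj be
   + cnj (complex_of_real c) * complex_of_real c * complex_of_real ga
   = complex_of_real (s^2 * al + c^2 * ga - 2 * c * s * (Re be * cos ph + Im be * sin ph))"
proof -
  have e: "(cos ph)^2 + (sin ph)^2 = 1" by simp
  show ?thesis
    by (simp add: complex_eq_iff cis.sel algebra_simps power2_eq_square)
       (metis (no_types, lifting) e power2_eq_square distrib_left mult.assoc mult.commute mult.left_commute mult_1_right)
qed

lemma zMz:
  "z11 t p \<bullet> (mat_of_rows_list 3 [[m11,m12,m13],[m12,m22,m23],[m13,m23,m33]] *\<^sub>v z11 t p)
   = m11 * (cos t)^2 - 2 * m12 * cos t * sin t * cos p - 2 * m13 * cos t * sin t * sin p
     + m22 * (sin t)^2 * (cos p)^2 + m33 * (sin t)^2 * (sin p)^2 + 2 * m23 * (sin t)^2 * cos p * sin p"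
  by (simp add: z11_def scalar_prod_def mat_of_rows_list_def eval_nat_numeral row_def algebra_simps power2_eq_square)

lemma sym3: "transpose_mat (mat_of_rows_list 3 [[m11,m12,m13],[m12,m22,m23],[m13,m23,m33::real]])
   = mat_of_rows_list 3 [[m11,m12,m13],[m12,m22,m23],[m13,m23,m33]]"
  by (rule eq_matI) (auto simp: mat_of_rows_list_def less_Suc_eq numeral_3_eq_3)


theorem corollary3p6:
  fixes n r i j :: nat and B :: "nat \<Rightarrow> complex mat" and U :: "complex mat"
  assumes "1 \<le> r" and "r \<le> n"
    and "\<And>q. q < r \<Longrightarrow> hermitian_mat n (B q)"
    and "unitary_mat n U"
    and "i < j" and "j < n" and "i < r"
  shows "\<exists>M :: real mat. \<exists>C :: real.
           M \<in> carrier_mat 3 3 \<and> transpose_mat M = M \<and>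
           (\<forall>\<theta> \<phi> :: real.
              gtilde r B (U * Givens n i j (Psi \<theta> \<phi>)) =
              complex_of_real (z11 \<theta> \<phi> \<bullet> (M *\<^sub>v z11 \<theta> \<phi>) + C))"
proof -
  note herm = assms(3)
  have Uc: "U \<in> carrier_mat n n" using assms(4) unfolding unitary_mat_def by simp
  have Bc: "B q \<in> carrier_mat n n" if "q < r" for q using herm[OF that] unfolding hermitian_mat_def by simp
  define u where "u q = (\<lambda>a. U $$ (a,q))" for q
  define al where "al = Re (Qf n (B i) (u i) (u i))"
  define ga where "ga = Re (Qf n (B i) (u j) (u j))"
  define be where "be = Qf n (B i) (u i) (u j)"
  define d where "d = (if j < r then 1 else (0::real))"
  define al' where "al' = Re (Qf n (B j) (u i) (u i))"
  define ga' where "ga' = Re (Qf n (B j) (u j) (u j))"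
  define be' where "be' = Qf n (B j) (u i) (u j)"
  define S where "S = {..<r} - {i} - {j}"
  define C where "C = (\<Sum>q\<in>S. Re (Qf n (B q) (u q) (u q)))"
  define M where "M = mat_of_rows_list 3
     [[al + d * ga', - Re be + d * Re be', - Im be + d * Im be'],
      [- Re be + d * Re be', ga + d * al', 0],
      [- Im be + d * Im be', 0, ga + d * al']]"
  have "gtilde r B (U * Givens n i j (Psi t p)) = complex_of_real (z11 t p \<bullet> (M *\<^sub>v z11 t p) + C)" for t p
  proof -
    define V where "V = U * Givens n i j (Psi t p)"
    have Vc: "V \<in> carrier_mat n n" unfolding V_def using Uc Givens_carrier by (metis mult_carrier_mat)
    define w where "w q = (\<lambda>a. V $$ (a,q))" for q
    have g1: "gtilde r B V = (\<Sum>q<r. Qf n (B q) (w q) (w q))"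
      unfolding gtilde_def w_def using quad_col[OF Vc Bc] assms(2) by (intro sum.cong refl) auto
    have wi: "Qf n (B q) (w i) (w i) = Qf n (B q) (\<lambda>a. complex_of_real (cos t) * u i a + (complex_of_real (sin t) * cis (- p)) * u j a)
        (\<lambda>a. complex_of_real (cos t) * u i a + (complex_of_real (sin t) * cis (- p)) * u j a)" for q
      by (rule Qf_cong) (use Uc assms(5,6) in \<open>simp add: w_def u_def V_def Givens_col Psi_entries Psi_entries'\<close>)
    have wj: "Qf n (B q) (w j) (w j) = Qf n (B q) (\<lambda>a. (- complex_of_real (sin t) * cis p) * u i a + complex_of_real (cos t) * u j a)
        (\<lambda>a. (- complex_of_real (sin t) * cis p) * u i a + complex_of_real (cos t) * u j a)" for q
      by (rule Qf_cong) (use Uc assms(5,6) in \<open>simp add: w_def u_def V_def Givens_col Psi_entries Psi_entries'\<close>)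
    have wq: "Qf n (B q) (w q) (w q) = Qf n (B q) (u q) (u q)" if "q \<in> S" for q
      by (rule Qf_cong) (use Uc assms(2,5,6) that in \<open>auto simp add: S_def w_def u_def V_def Givens_col\<close>)
    have Ti: "Qf n (B i) (w i) (w i) = complex_of_real ((cos t)^2 * al + (sin t)^2 * ga + 2 * cos t * sin t * (Re be * cos p + Im be * sin p))"
      unfolding wi Qf_bilin Qf_swap[OF herm[OF assms(7)], of "u j" "u i"]
      using Qf_real[OF herm[OF assms(7)]] term_i unfolding al_def ga_def be_def by metis
    have Tj: "j < r \<Longrightarrow> Qf n (B j) (w j) (w j) = complex_of_real ((sin t)^2 * al' + (cos t)^2 * ga' - 2 * cos t * sin t * (Re be' * cos p + Im be' * sin p))"
      unfolding wj Qf_bilin using Qf_swap[OF herm, of j "u j" "u i"] Qf_real[OF herm, of j] term_j unfolding al'_def ga'_def be'_def by metis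
    have TS: "(\<Sum>q\<in>S. Qf n (B q) (w q) (w q)) = complex_of_real C"
      unfolding C_def of_real_sum using wq Qf_real[OF herm] by (intro sum.cong refl) (auto simp: S_def)
    have split: "(\<Sum>q<r. Qf n (B q) (w q) (w q)) = Qf n (B i) (w i) (w i)
        + (if j < r then Qf n (B j) (w j) (w j) else 0) + (\<Sum>q\<in>S. Qf n (B q) (w q) (w q))"
    proof -
      have "(\<Sum>q<r. Qf n (B q) (w q) (w q)) = Qf n (B i) (w i) (w i) + (\<Sum>q\<in>{..<r} - {i}. Qf n (B q) (w q) (w q))"
        using assms(7) by (subst sum.remove[of _ i]) auto
      moreover have "(\<Sum>q\<in>{..<r} - {i}. Qf n (B q) (w q) (w q)) = (if j < r then Qf n (B j) (w j) (w j) else 0) + (\<Sum>q\<in>S. Qf n (B q) (w q) (w q))"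
      proof (cases "j < r")
        case True
        then show ?thesis unfolding S_def using assms(5) by (subst sum.remove[of _ j]) auto
      next
        case False
        then have "{..<r} - {i} = S" unfolding S_def by auto
        then show ?thesis using False by simp
      qed
      ultimately show ?thesis by simp
    qed
    have zz: "z11 t p \<bullet> (M *\<^sub>v z11 t p) = (cos t)^2 * al + (sin t)^2 * ga + 2 * cos t * sin t * (Re be * cos p + Im be * sin p)
       + d * ((sin t)^2 * al' + (cos t)^2 * ga' - 2 * cos t * sin t * (Re be' * cos p + Im be' * sin p))"
    proof -
      have e: "(sin t)^2 * (cos p)^2 + (sin t)^2 * (sin p)^2 = (sin t)^2"
        by (metis distrib_left mult_1_right sin_cos_squared_add2)
      show ?thesis unfolding M_def zMz
        by (simp add: algebra_simps power2_eq_square)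
          (smt (verit) e power2_eq_square distrib_left mult.assoc mult.commute mult.left_commute)
    qed
    show ?thesis
      unfolding V_def[symmetric] g1 split TS Ti zz
      using Tj by (cases "j < r") (simp_all add: d_def)
  qed
  moreover have "M \<in> carrier_mat 3 3" unfolding M_def mat_of_rows_list_def by (simp add: numeral_3_eq_3)
  moreover have "transpose_mat M = M" unfolding M_def by (rule sym3)
  ultimately show ?thesis by blast
qed

end
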